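(* For all formulas $A,B$ of bilattice logic: if for every HBL $(\mathbb{L}_1,\mathbb{L}_2,\mathrm{n},\mathrm{p})$ and every assignment of the atoms $p_1$ to elements of $\mathbb{L}_1$ and $p_2$ to elements of $\mathbb{L}_2$ the interpretation of $t_1(A)$ is $\le_1$ the interpretation of $t_1(B)$, then $A\vDash_{\mathsf{B}}B$.
   Context: A heterogeneous bilattice (HBL) is a tuple $(\mathbb{L}_1,\mathbb{L}_2,\mathrm{n},\mathrm{p})$ where $\mathbb{L}_1=(L_1,\sqcap_1,\sqcup_1,0_1,1_1)$, $\mathbb{L}_2=(L_2,\sqcap_2,\sqcup_2,0_2,1_2)$ are bounded distributive lattices and $\mathrm{n}:\mathbb{L}_1\to\mathbb{L}_2$, $\mathrm{p}:\mathbb{L}_2\to\mathbb{L}_1$ are mutually inverse lattice isomorphisms; $\le_1$ is the order of $\mathbb{L}_1$. A bilattice is $(B,\le_t,\le_k,\neg)$ with $(B,\le_t)$ (operations $\wedge,\vee$) and $(B,\le_k)$ (operations $\otimes,\oplus$) lattices and $\neg$ satisfying: $a\le_tb\Rightarrow\neg b\le_t\neg a$, $a\le_kb\Rightarrow\neg a\le_k\neg b$, $\neg\neg a=a$. It is distributive if $x\circ(y\bullet z)=(x\circ y)\bullet(x\circ z)$ for all $\circ,\bullet\in\{\wedge,\vee,\otimes,\oplus\}$; bounds are $\mathtt{f},\mathtt{t}$ for $\le_t$ and $\bot,\top$ for $\le_k$. $\mathsf{B}$ is the class of bounded distributive bilattices. Formulas of bilattice logic: $A::=p\mid \mathtt{t}\mid\mathtt{f}\mid\top\mid\bot\mid\neg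 A\mid A\wedge A\mid A\vee A\mid A\otimes A\mid A\oplus A$, interpreted in bilattices in the obvious way. $A\vDash_{\mathsf{B}}C$ means: for every $\mathbb{B}\in\mathsf{B}$ and every assignment, if $A^{\mathbb{B}}\in F_{\mathtt{t}}$ then $C^{\mathbb{B}}\in F_{\mathtt{t}}$, where $F_{\mathtt{t}}=\{a\in B:\mathtt{t}\le_ka\}$. Translation into the two-sorted language (type-1 terms built from type-1 atoms $p_1$, $0_1,1_1,\sqcap_1,\sqcup_1$ and $\mathrm{p}$ applied to type-2 terms; type-2 terms analogously with $\mathrm{n}$): $t_1(p)=p_1$, $t_2(p)=p_2$; $t_1(\mathtt{t})=1_1,t_2(\mathtt{t})=0_2$; $t_1(\mathtt{f})=0_1,t_2(\mathtt{f})=1_2$; $t_1(\top)=1_1,t_2(\top)=1_2$; $t_1(\bot)=0_1,t_2(\bot)=0_2$; $t_1(A\wedge B)=t_1A\sqcap_1t_1B$, $t_2(A\wedge B)=t_2A\sqcup_2t_2B$; $t_1(A\vee B)=t_1A\sqcup_1t_1B$, $t_2(A\vee B)=t_2A\sqcap_2t_2B$; $t_1(A\otimes B)=t_1A\sqcap_1t_1B$, $t_2(A\otimes B)=t_2A\sqcap_2t_2B$; $t_1(A\oplus B)=t_1A\sqcup_1t_1B$, $t_2(A\oplus B)=t_2A\sqcup_2t_2B$; $t_1(\neg A)=\mathrm{p}\,t_2(A)$, $t_2(\neg A)=\mathrm{n}\,t_1(A)$. *)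

theory Defs
  imports Main
begin

definition lattice_on :: "'a set \<Rightarrow> ('a \<Rightarrow> 'a \<Rightarrow> 'a) \<Rightarrow> ('a \<Rightarrow> 'a \<Rightarrow> 'a) \<Rightarrow> bool" where
  "lattice_on L m j \<longleftrightarrow>
     (\<forall>x\<in>L. \<forall>y\<in>L. m x y \<in> L \<and> j x y \<in> L) \<and>
     (\<forall>x\<in>L. \<forall>y\<in>L. m x y = m y x \<and> j x y = j y x) \<and>
     (\<forall>x\<in>L. \<forall>y\<in>L. \<forall>z\<in>L. m x (m y z) = m (m x y) z \<and> j x (j y z) = j (j x y) z) \<and>
     (\<forall>x\<in>L. \<forall>y\<in>L. m x (j x y) = x \<and> j x (m x y) = x)"

definition lat_le :: "('a \<Rightarrow> 'a \<Rightarrow> 'a) \<Rightarrow> 'a \<Rightarrow> 'a \<Rightarrow> bool" where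
  "lat_le m x y \<longleftrightarrow> m x y = x"

definition bdl :: "'a set \<Rightarrow> ('a \<Rightarrow> 'a \<Rightarrow> 'a) \<Rightarrow> ('a \<Rightarrow> 'a \<Rightarrow> 'a) \<Rightarrow> 'a \<Rightarrow> 'a \<Rightarrow> bool" where
  "bdl L m j z u \<longleftrightarrow> lattice_on L m j \<and>
     (\<forall>x\<in>L. \<forall>y\<in>L. \<forall>w\<in>L. m x (j y w) = j (m x y) (m x w)) \<and>
     z \<in> L \<and> u \<in> L \<and> (\<forall>x\<in>L. lat_le m z x \<and> lat_le m x u)"

record 'a hbl =
  L1 :: "'a set"  meet1 :: "'a \<Rightarrow> 'a \<Rightarrow> 'a"  join1 :: "'a \<Rightarrow> 'a \<Rightarrow> 'a"  zero1 :: 'a  one1 :: 'a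
  L2 :: "'a set"  meet2 :: "'a \<Rightarrow> 'a \<Rightarrow> 'a"  join2 :: "'a \<Rightarrow> 'a \<Rightarrow> 'a"  zero2 :: 'a  one2 :: 'a
  nn :: "'a \<Rightarrow> 'a"
  pp :: "'a \<Rightarrow> 'a"

definition is_hbl :: "'a hbl \<Rightarrow> bool" where
  "is_hbl H \<longleftrightarrow>
     bdl (L1 H) (meet1 H) (join1 H) (zero1 H) (one1 H) \<and>
     bdl (L2 H) (meet2 H) (join2 H) (zero2 H) (one2 H) \<and>
     (\<forall>x\<in>L1 H. nn H x \<in> L2 H \<and> pp H (nn H x) = x) \<and>
     (\<forall>y\<in>L2 H. pp H y \<in> L1 H \<and> nn H (pp H y) = y) \<and>
     (\<forall>x\<in>L1 H. \<forall>y\<in>L1 H. nn H (meet1 H x y) = meet2 H (nn H x) (nn H y)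
                       \<and> nn H (join1 H x y) = join2 H (nn H x) (nn H y)) \<and>
     (\<forall>x\<in>L2 H. \<forall>y\<in>L2 H. pp H (meet2 H x y) = meet1 H (pp H x) (pp H y)
                       \<and> pp H (join2 H x y) = join1 H (pp H x) (pp H y))"

datatype 'v tm1 = Var1 'v | Zero1 | One1 | Meet1 "'v tm1" "'v tm1" | Join1 "'v tm1" "'v tm1"
                | P "'v tm2"
     and 'v tm2 = Var2 'v | Zero2 | One2 | Meet2 "'v tm2" "'v tm2" | Join2 "'v tm2" "'v tm2"
                | N "'v tm1"

fun I1 :: "'a hbl \<Rightarrow> ('v \<Rightarrow> 'a) \<Rightarrow> ('v \<Rightarrow> 'a) \<Rightarrow> 'v tm1 \<Rightarrow> 'a"
and I2 :: "'a hbl \<Rightarrow> ('v \<Rightarrow> 'a) \<Rightarrow> ('v \<Rightarrow> 'a) \<Rightarrow> 'v tm2 \<Rightarrow> 'a" where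
  "I1 H a1 a2 (Var1 v) = a1 v"
| "I1 H a1 a2 Zero1 = zero1 H"
| "I1 H a1 a2 One1 = one1 H"
| "I1 H a1 a2 (Meet1 s t) = meet1 H (I1 H a1 a2 s) (I1 H a1 a2 t)"
| "I1 H a1 a2 (Join1 s t) = join1 H (I1 H a1 a2 s) (I1 H a1 a2 t)"
| "I1 H a1 a2 (P s) = pp H (I2 H a1 a2 s)"
| "I2 H a1 a2 (Var2 v) = a2 v"
| "I2 H a1 a2 Zero2 = zero2 H"
| "I2 H a1 a2 One2 = one2 H"
| "I2 H a1 a2 (Meet2 s t) = meet2 H (I2 H a1 a2 s) (I2 H a1 a2 t)"
| "I2 H a1 a2 (Join2 s t) = join2 H (I2 H a1 a2 s) (I2 H a1 a2 t)"
| "I2 H a1 a2 (N s) = nn H (I1 H a1 a2 s)"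

datatype 'v fm = Atom 'v | TT | FF | Top | Bot | Neg "'v fm"
  | And "'v fm" "'v fm" | Or "'v fm" "'v fm" | Otimes "'v fm" "'v fm" | Oplus "'v fm" "'v fm"

fun t1 :: "'v fm \<Rightarrow> 'v tm1" and t2 :: "'v fm \<Rightarrow> 'v tm2" where
  "t1 (Atom p) = Var1 p"
| "t1 TT = One1"
| "t1 FF = Zero1"
| "t1 Top = One1"
| "t1 Bot = Zero1"
| "t1 (And A B) = Meet1 (t1 A) (t1 B)"
| "t1 (Or A B) = Join1 (t1 A) (t1 B)"
| "t1 (Otimes A B) = Meet1 (t1 A) (t1 B)"
| "t1 (Oplus A B) = Join1 (t1 A) (t1 B)"
| "t1 (Neg A) = P (t2 A)"
| "t2 (Atom p) = Var2 p"
| "t2 TT = Zero2"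
| "t2 FF = One2"
| "t2 Top = One2"
| "t2 Bot = Zero2"
| "t2 (And A B) = Join2 (t2 A) (t2 B)"
| "t2 (Or A B) = Meet2 (t2 A) (t2 B)"
| "t2 (Otimes A B) = Meet2 (t2 A) (t2 B)"
| "t2 (Oplus A B) = Join2 (t2 A) (t2 B)"
| "t2 (Neg A) = N (t1 A)"

record 'a bilat =
  bcar :: "'a set"
  tmeet :: "'a \<Rightarrow> 'a \<Rightarrow> 'a"  tjoin :: "'a \<Rightarrow> 'a \<Rightarrow> 'a"
  kmeet :: "'a \<Rightarrow> 'a \<Rightarrow> 'a"  kjoin :: "'a \<Rightarrow> 'a \<Rightarrow> 'a"
  bneg :: "'a \<Rightarrow> 'a"
  bf :: 'a  bt :: 'a  bbot :: 'a  btop :: 'a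

definition le_t :: "'a bilat \<Rightarrow> 'a \<Rightarrow> 'a \<Rightarrow> bool" where
  "le_t B x y \<longleftrightarrow> lat_le (tmeet B) x y"

definition le_k :: "'a bilat \<Rightarrow> 'a \<Rightarrow> 'a \<Rightarrow> bool" where
  "le_k B x y \<longleftrightarrow> lat_le (kmeet B) x y"

definition bd_bilattice :: "'a bilat \<Rightarrow> bool" where
  "bd_bilattice B \<longleftrightarrow>
     lattice_on (bcar B) (tmeet B) (tjoin B) \<and>
     lattice_on (bcar B) (kmeet B) (kjoin B) \<and>
     (\<forall>x\<in>bcar B. bneg B x \<in> bcar B \<and> bneg B (bneg B x) = x) \<and>
     (\<forall>x\<in>bcar B. \<forall>y\<in>bcar B. le_t B x y \<longrightarrow> le_t B (bneg B y) (bneg B x)) \<and>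
     (\<forall>x\<in>bcar B. \<forall>y\<in>bcar B. le_k B x y \<longrightarrow> le_k B (bneg B x) (bneg B y)) \<and>
     (\<forall>o1\<in>{tmeet B, tjoin B, kmeet B, kjoin B}. \<forall>o2\<in>{tmeet B, tjoin B, kmeet B, kjoin B}.
        \<forall>x\<in>bcar B. \<forall>y\<in>bcar B. \<forall>z\<in>bcar B. o1 x (o2 y z) = o2 (o1 x y) (o1 x z)) \<and>
     bf B \<in> bcar B \<and> bt B \<in> bcar B \<and> bbot B \<in> bcar B \<and> btop B \<in> bcar B \<and>
     (\<forall>x\<in>bcar B. le_t B (bf B) x \<and> le_t B x (bt B) \<and> le_k B (bbot B) x \<and> le_k B x (btop B))"

fun beval :: "'a bilat \<Rightarrow> ('v \<Rightarrow> 'a) \<Rightarrow> 'v fm \<Rightarrow> 'a" where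
  "beval B v (Atom p) = v p"
| "beval B v TT = bt B"
| "beval B v FF = bf B"
| "beval B v Top = btop B"
| "beval B v Bot = bbot B"
| "beval B v (Neg A) = bneg B (beval B v A)"
| "beval B v (And A C) = tmeet B (beval B v A) (beval B v C)"
| "beval B v (Or A C) = tjoin B (beval B v A) (beval B v C)"
| "beval B v (Otimes A C) = kmeet B (beval B v A) (beval B v C)"
| "beval B v (Oplus A C) = kjoin B (beval B v A) (beval B v C)"

text \<open>The designated filter F_t = {a. t \<le>_k a}.\<close>
definition in_Ft :: "'a bilat \<Rightarrow> 'a \<Rightarrow> bool" where
  "in_Ft B a \<longleftrightarrow> a \<in> bcar B \<and> le_k B (bt B) a"

end

theory Submission
  imports Defs
begin

locale dbl =
  fixes C :: "'a set" and tm tj km kj :: "'a \<Rightarrow> 'a \<Rightarrow> 'a" and ng :: "'a \<Rightarrow> 'a"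
    and ff tt bo tp :: 'a
  assumes tlat: "lattice_on C tm tj" and klat: "lattice_on C km kj"
  and ngC: "x \<in> C \<Longrightarrow> ng x \<in> C" and ngng: "x \<in> C \<Longrightarrow> ng (ng x) = x"
  and ngt: "x \<in> C \<Longrightarrow> y \<in> C \<Longrightarrow> tm x y = x \<Longrightarrow> tm (ng y) (ng x) = ng y"
  and ngk: "x \<in> C \<Longrightarrow> y \<in> C \<Longrightarrow> km x y = x \<Longrightarrow> km (ng x) (ng y) = ng x"
  and dist: "o1 \<in> {tm,tj,km,kj} \<Longrightarrow> o2 \<in> {tm,tj,km,kj} \<Longrightarrow> x \<in> C \<Longrightarrow> y \<in> C \<Longrightarrow> z \<in> C
       \<Longrightarrow> o1 x (o2 y z) = o2 (o1 x y) (o1 x z)"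
  and cst: "ff \<in> C" "tt \<in> C" "bo \<in> C" "tp \<in> C"
  and bnd: "x \<in> C \<Longrightarrow> tm ff x = ff" "x \<in> C \<Longrightarrow> tm x tt = x"
           "x \<in> C \<Longrightarrow> km bo x = bo" "x \<in> C \<Longrightarrow> km x tp = x"
begin

lemma cl_1: "x \<in> C \<Longrightarrow> y \<in> C \<Longrightarrow> tm x y \<in> C"
  using tlat unfolding lattice_on_def by blast
lemma cl_2: "x \<in> C \<Longrightarrow> y \<in> C \<Longrightarrow> tj x y \<in> C"
  using tlat unfolding lattice_on_def by blast
lemma cl_3: "x \<in> C \<Longrightarrow> y \<in> C \<Longrightarrow> km x y \<in> C"
  using klat unfolding lattice_on_def by blast
lemma cl_4: "x \<in> C \<Longrightarrow> y \<in> C \<Longrightarrow> kj x y \<in> C"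
  using klat unfolding lattice_on_def by blast
lemmas cl = cl_1 cl_2 cl_3 cl_4

lemma cm_1: "x \<in> C \<Longrightarrow> y \<in> C \<Longrightarrow> tm x y = tm y x"
  using tlat unfolding lattice_on_def by blast
lemma cm_2: "x \<in> C \<Longrightarrow> y \<in> C \<Longrightarrow> tj x y = tj y x"
  using tlat unfolding lattice_on_def by blast
lemma cm_3: "x \<in> C \<Longrightarrow> y \<in> C \<Longrightarrow> km x y = km y x"
  using klat unfolding lattice_on_def by blast
lemma cm_4: "x \<in> C \<Longrightarrow> y \<in> C \<Longrightarrow> kj x y = kj y x"
  using klat unfolding lattice_on_def by blast
lemmas cm = cm_1 cm_2 cm_3 cm_4

lemma asc_1: "x \<in> C \<Longrightarrow> y \<in> C \<Longrightarrow> z \<in> C \<Longrightarrow> tm x (tm y z) = tm (tm x y) z"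
  using tlat unfolding lattice_on_def by blast
lemma asc_2: "x \<in> C \<Longrightarrow> y \<in> C \<Longrightarrow> z \<in> C \<Longrightarrow> tj x (tj y z) = tj (tj x y) z"
  using tlat unfolding lattice_on_def by blast
lemma asc_3: "x \<in> C \<Longrightarrow> y \<in> C \<Longrightarrow> z \<in> C \<Longrightarrow> km x (km y z) = km (km x y) z"
  using klat unfolding lattice_on_def by blast
lemma asc_4: "x \<in> C \<Longrightarrow> y \<in> C \<Longrightarrow> z \<in> C \<Longrightarrow> kj x (kj y z) = kj (kj x y) z"
  using klat unfolding lattice_on_def by blast
lemmas asc = asc_1 asc_2 asc_3 asc_4

lemma ab_1: "x \<in> C \<Longrightarrow> y \<in> C \<Longrightarrow> tm x (tj x y) = x"
  using tlat unfolding lattice_on_def by blast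
lemma ab_2: "x \<in> C \<Longrightarrow> y \<in> C \<Longrightarrow> tj x (tm x y) = x"
  using tlat unfolding lattice_on_def by blast
lemma ab_3: "x \<in> C \<Longrightarrow> y \<in> C \<Longrightarrow> km x (kj x y) = x"
  using klat unfolding lattice_on_def by blast
lemma ab_4: "x \<in> C \<Longrightarrow> y \<in> C \<Longrightarrow> kj x (km x y) = x"
  using klat unfolding lattice_on_def by blast
lemmas ab = ab_1 ab_2 ab_3 ab_4

lemma idm: "x \<in> C \<Longrightarrow> tm x x = x" "x \<in> C \<Longrightarrow> km x x = x" "x \<in> C \<Longrightarrow> tj x x = x" "x \<in> C \<Longrightarrow> kj x x = x"
proof -
  assume x: "x \<in> C"
  show "tm x x = x" using ab(1)[OF x cl(1)[OF x x], unfolded ab(2)[OF x x]] .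
  show "km x x = x" using ab(3)[OF x cl(3)[OF x x], unfolded ab(4)[OF x x]] .
  show "tj x x = x" using ab(2)[OF x cl(2)[OF x x], unfolded ab(1)[OF x x]] .
  show "kj x x = x" using ab(4)[OF x cl(4)[OF x x], unfolded ab(3)[OF x x]] .
qed

lemmas D = dist[of km tm] dist[of tm km] dist[of kj tm] dist[of tm tj] dist[of km kj]
  dist[of tm tj] dist[of kj km]

lemma t_trans: "a \<in> C \<Longrightarrow> b \<in> C \<Longrightarrow> c \<in> C \<Longrightarrow> tm a b = a \<Longrightarrow> tm b c = b \<Longrightarrow> tm a c = a"
  by (metis asc(1))
lemma k_trans: "a \<in> C \<Longrightarrow> b \<in> C \<Longrightarrow> c \<in> C \<Longrightarrow> km a b = a \<Longrightarrow> km b c = b \<Longrightarrow> km a c = a"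
  by (metis asc(3))
lemma t_anti: "a \<in> C \<Longrightarrow> b \<in> C \<Longrightarrow> tm a b = a \<Longrightarrow> tm b a = b \<Longrightarrow> a = b"
  by (metis cm(1))
lemma k_anti: "a \<in> C \<Longrightarrow> b \<in> C \<Longrightarrow> km a b = a \<Longrightarrow> km b a = b \<Longrightarrow> a = b"
  by (metis cm(3))
lemma t_glb: "a \<in> C \<Longrightarrow> b \<in> C \<Longrightarrow> c \<in> C \<Longrightarrow> tm a b = a \<Longrightarrow> tm a c = a \<Longrightarrow> tm a (tm b c) = a"
  by (metis asc(1))
lemma k_glb: "a \<in> C \<Longrightarrow> b \<in> C \<Longrightarrow> c \<in> C \<Longrightarrow> km a b = a \<Longrightarrow> km a c = a \<Longrightarrow> km a (km b c) = a"
  by (metis asc(3))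
lemma t_lb: "b \<in> C \<Longrightarrow> c \<in> C \<Longrightarrow> tm (tm b c) b = tm b c" "b \<in> C \<Longrightarrow> c \<in> C \<Longrightarrow> tm (tm b c) c = tm b c"
   apply (metis asc(1) cm(1) idm(1) cl(1))
  by (metis asc(1) idm(1))
lemma k_lb: "b \<in> C \<Longrightarrow> c \<in> C \<Longrightarrow> km (km b c) b = km b c" "b \<in> C \<Longrightarrow> c \<in> C \<Longrightarrow> km (km b c) c = km b c"
   apply (metis asc(3) cm(3) idm(2) cl(3))
  by (metis asc(3) idm(2))
lemma t_ub: "b \<in> C \<Longrightarrow> c \<in> C \<Longrightarrow> tm b (tj b c) = b" "b \<in> C \<Longrightarrow> c \<in> C \<Longrightarrow> tm c (tj b c) = c"
  by (metis ab(1) cm(2))+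
lemma k_ub: "b \<in> C \<Longrightarrow> c \<in> C \<Longrightarrow> km b (kj b c) = b" "b \<in> C \<Longrightarrow> c \<in> C \<Longrightarrow> km c (kj b c) = c"
  by (metis ab(3) cm(4))+
lemma t_lub: "a \<in> C \<Longrightarrow> b \<in> C \<Longrightarrow> c \<in> C \<Longrightarrow> tm b a = b \<Longrightarrow> tm c a = c \<Longrightarrow> tm (tj b c) a = tj b c"
proof -
  assume h: "a \<in> C" "b \<in> C" "c \<in> C" "tm b a = b" "tm c a = c"
  have "tm a (tj b c) = tj (tm a b) (tm a c)" using dist[of tm tj a b c] h by simp
  then show ?thesis using h by (metis cm(1) cl(2))
qed
lemma k_lub: "a \<in> C \<Longrightarrow> b \<in> C \<Longrightarrow> c \<in> C \<Longrightarrow> km b a = b \<Longrightarrow> km c a = c \<Longrightarrow> km (kj b c) a = kj b c"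
proof -
  assume h: "a \<in> C" "b \<in> C" "c \<in> C" "km b a = b" "km c a = c"
  have "km a (kj b c) = kj (km a b) (km a c)" using dist[of km kj a b c] h by simp
  then show ?thesis using h by (metis cm(3) cl(4))
qed


lemma kmt_mono: "c \<in> C \<Longrightarrow> a \<in> C \<Longrightarrow> b \<in> C \<Longrightarrow> tm a b = a \<Longrightarrow> tm (km c a) (km c b) = km c a"
  using dist[of km tm c a b] by simp
lemma kjt_mono: "c \<in> C \<Longrightarrow> a \<in> C \<Longrightarrow> b \<in> C \<Longrightarrow> tm a b = a \<Longrightarrow> tm (kj c a) (kj c b) = kj c a"
  using dist[of kj tm c a b] by simp

lemma L1: assumes x: "x \<in> C" and y: "y \<in> C" and hx: "km x tt = x" and hy: "km y tt = y"
  shows "tm x y = km x y"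
proof -
  define w where "w = tm x y"
  define u where "u = km x y"
  have wC: "w \<in> C" and uC: "u \<in> C" using x y cl unfolding w_def u_def by auto
  have h1: "tm w x = w" "tm w y = w" using t_lb[OF x y] unfolding w_def by auto
  have "tm (km w w) (km w x) = km w w" using kmt_mono[OF wC wC x h1(1)] .
  hence h2: "tm w (km x w) = w" using idm(2)[OF wC] cm(3)[OF wC x] by simp
  have h3: "tm (km x w) u = km x w" using kmt_mono[OF x wC y h1(2)] unfolding u_def .
  have wu: "tm w u = w" using t_trans[OF wC cl(3)[OF x wC] uC h2 h3] .
  have h4: "tm u x = u" using kmt_mono[OF x y cst(2) bnd(2)[OF y]] hx unfolding u_def by simp
  have h5: "tm u y = u" using kmt_mono[OF y x cst(2) bnd(2)[OF x]] hy cm(3)[OF x y] unfolding u_def by simp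
  have uw: "tm u w = u" using t_glb[OF uC x y h4 h5] unfolding w_def .
  show ?thesis using t_anti[OF wC uC wu uw] unfolding w_def u_def .
qed

lemma bo_le: assumes y: "y \<in> C" and hy: "km y tt = y" shows "tm bo y = bo"
proof -
  have "tm bo (km y tt) = km (tm bo y) (tm bo tt)" using dist[of tm km bo y tt] y cst by simp
  also have "tm bo tt = bo" using bnd(2)[OF cst(3)] .
  also have "km (tm bo y) bo = bo" using cm(3)[OF cl(1)[OF cst(3) y] cst(3)] bnd(3)[OF cl(1)[OF cst(3) y]] by simp
  finally show ?thesis using hy by simp
qed

lemma kj_bo: "x \<in> C \<Longrightarrow> kj x bo = x"
  using ab(4)[of x bo] cm(3)[of x bo] bnd(3)[of x] cst(3) by simp

lemma L2: assumes x: "x \<in> C" and y: "y \<in> C" and hx: "km x tt = x" and hy: "km y tt = y"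
  shows "tj x y = kj x y"
proof -
  define w where "w = tj x y"
  define u where "u = kj x y"
  have wC: "w \<in> C" and uC: "u \<in> C" using x y cl unfolding w_def u_def by auto
  have "tm (kj x bo) (kj x y) = kj x bo" using kjt_mono[OF x cst(3) y bo_le[OF y hy]] .
  hence xu: "tm x u = x" using kj_bo[OF x] unfolding u_def by simp
  have "tm (kj y bo) (kj y x) = kj y bo" using kjt_mono[OF y cst(3) x bo_le[OF x hx]] .
  hence yu: "tm y u = y" using kj_bo[OF y] cm(4)[OF x y] unfolding u_def by simp
  have wu: "tm w u = w" using t_lub[OF uC x y xu yu] unfolding w_def .
  have yw: "tm y w = y" and xw: "tm x w = x" using t_ub[OF x y] unfolding w_def by auto
  have a1: "tm u (kj x w) = u" using kjt_mono[OF x y wC yw] unfolding u_def .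
  have "tm (kj w x) (kj w w) = kj w x" using kjt_mono[OF wC x wC xw] .
  hence a2: "tm (kj x w) w = kj x w" using idm(4)[OF wC] cm(4)[OF wC x] by simp
  have uw: "tm u w = u" using t_trans[OF uC cl(4)[OF x wC] wC a1 a2] .
  show ?thesis using t_anti[OF wC uC wu uw] unfolding w_def u_def .
qed

lemma L3: "km tt ff = bo"
proof -
  have "tm (km tt ff) (km tt bo) = km tt ff" using kmt_mono[OF cst(2) cst(1) cst(3) bnd(1)[OF cst(3)]] .
  hence a: "tm (km tt ff) bo = km tt ff" using cm(3)[OF cst(2) cst(3)] bnd(3)[OF cst(2)] by simp
  have "tm (km ff bo) (km ff tt) = km ff bo" using kmt_mono[OF cst(1) cst(3) cst(2) bnd(2)[OF cst(3)]] .
  hence b: "tm bo (km tt ff) = bo" using cm(3)[OF cst(1) cst(3)] bnd(3)[OF cst(1)] cm(3)[OF cst(1) cst(2)] by simp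
  show ?thesis using t_anti[OF cl(3)[OF cst(2) cst(1)] cst(3) a b] .
qed

lemma ng_tt: "ng tt = ff"
proof -
  have "tm (ng ff) tt = ng ff" using bnd(2)[OF ngC[OF cst(1)]] .
  hence "tm (ng tt) (ng (ng ff)) = ng tt" using ngt[OF ngC[OF cst(1)] cst(2)] by simp
  hence a: "tm (ng tt) ff = ng tt" using ngng[OF cst(1)] by simp
  have b: "tm ff (ng tt) = ff" using bnd(1)[OF ngC[OF cst(2)]] .
  show ?thesis using t_anti[OF ngC[OF cst(2)] cst(1) a b] .
qed

lemma ng_ff: "ng ff = tt" using ngng[OF cst(2)] ng_tt by simp

lemma ng_km: assumes x: "x \<in> C" and y: "y \<in> C" shows "ng (km x y) = km (ng x) (ng y)"
proof -
  have xyC: "km x y \<in> C" using cl(3)[OF x y] .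
  have nx: "ng x \<in> C" and ny: "ng y \<in> C" using ngC x y by auto
  have nxyC: "km (ng x) (ng y) \<in> C" using cl(3)[OF nx ny] .
  have a: "km (ng (km x y)) (km (ng x) (ng y)) = ng (km x y)"
    using k_glb[OF ngC[OF xyC] nx ny ngk[OF xyC x k_lb(1)[OF x y]] ngk[OF xyC y k_lb(2)[OF x y]]] .
  have "km (ng (km (ng x) (ng y))) x = ng (km (ng x) (ng y))"
    using ngk[OF nxyC nx k_lb(1)[OF nx ny]] ngng[OF x] by simp
  moreover have "km (ng (km (ng x) (ng y))) y = ng (km (ng x) (ng y))"
    using ngk[OF nxyC ny k_lb(2)[OF nx ny]] ngng[OF y] by simp
  ultimately have "km (ng (km (ng x) (ng y))) (km x y) = ng (km (ng x) (ng y))"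
    using k_glb[OF ngC[OF nxyC] x y] by simp
  hence "km (ng (ng (km (ng x) (ng y)))) (ng (km x y)) = ng (ng (km (ng x) (ng y)))"
    using ngk[OF ngC[OF nxyC] xyC] by simp
  hence b: "km (km (ng x) (ng y)) (ng (km x y)) = km (ng x) (ng y)" using ngng[OF nxyC] by simp
  show ?thesis using k_anti[OF ngC[OF xyC] nxyC a b] .
qed

lemma ng_kj: assumes x: "x \<in> C" and y: "y \<in> C" shows "ng (kj x y) = kj (ng x) (ng y)"
proof -
  have xyC: "kj x y \<in> C" using cl(4)[OF x y] .
  have nx: "ng x \<in> C" and ny: "ng y \<in> C" using ngC x y by auto
  have nxyC: "kj (ng x) (ng y) \<in> C" using cl(4)[OF nx ny] .
  have b: "km (kj (ng x) (ng y)) (ng (kj x y)) = kj (ng x) (ng y)"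
    using k_lub[OF ngC[OF xyC] nx ny ngk[OF x xyC k_ub(1)[OF x y]] ngk[OF y xyC k_ub(2)[OF x y]]] .
  have "km x (ng (kj (ng x) (ng y))) = x"
    using ngk[OF nx nxyC k_ub(1)[OF nx ny]] ngng[OF x] by simp
  moreover have "km y (ng (kj (ng x) (ng y))) = y"
    using ngk[OF ny nxyC k_ub(2)[OF nx ny]] ngng[OF y] by simp
  ultimately have "km (kj x y) (ng (kj (ng x) (ng y))) = kj x y"
    using k_lub[OF ngC[OF nxyC] x y] by simp
  hence "km (ng (kj x y)) (ng (ng (kj (ng x) (ng y)))) = ng (kj x y)"
    using ngk[OF xyC ngC[OF nxyC]] by simp
  hence a: "km (ng (kj x y)) (kj (ng x) (ng y)) = ng (kj x y)" using ngng[OF nxyC] by simp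
  show ?thesis using k_anti[OF ngC[OF xyC] nxyC a b] .
qed

lemma ng_tm: assumes x: "x \<in> C" and y: "y \<in> C" shows "ng (tm x y) = tj (ng x) (ng y)"
proof -
  have xyC: "tm x y \<in> C" using cl(1)[OF x y] .
  have nx: "ng x \<in> C" and ny: "ng y \<in> C" using ngC x y by auto
  have nxyC: "tj (ng x) (ng y) \<in> C" using cl(2)[OF nx ny] .
  have b: "tm (tj (ng x) (ng y)) (ng (tm x y)) = tj (ng x) (ng y)"
    using t_lub[OF ngC[OF xyC] nx ny ngt[OF xyC x t_lb(1)[OF x y]] ngt[OF xyC y t_lb(2)[OF x y]]] .
  have "tm (ng (tj (ng x) (ng y))) x = ng (tj (ng x) (ng y))"
    using ngt[OF nx nxyC t_ub(1)[OF nx ny]] ngng[OF x] by simp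
  moreover have "tm (ng (tj (ng x) (ng y))) y = ng (tj (ng x) (ng y))"
    using ngt[OF ny nxyC t_ub(2)[OF nx ny]] ngng[OF y] by simp
  ultimately have "tm (ng (tj (ng x) (ng y))) (tm x y) = ng (tj (ng x) (ng y))"
    using t_glb[OF ngC[OF nxyC] x y] by simp
  hence "tm (ng (tm x y)) (ng (ng (tj (ng x) (ng y)))) = ng (tm x y)"
    using ngt[OF ngC[OF nxyC] xyC] by simp
  hence a: "tm (ng (tm x y)) (tj (ng x) (ng y)) = ng (tm x y)" using ngng[OF nxyC] by simp
  show ?thesis using t_anti[OF ngC[OF xyC] nxyC a b] .
qed

lemma ng_tj: assumes x: "x \<in> C" and y: "y \<in> C" shows "ng (tj x y) = tm (ng x) (ng y)"
proof -
  have nx: "ng x \<in> C" and ny: "ng y \<in> C" using ngC x y by auto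
  have "ng (tm (ng x) (ng y)) = tj x y" using ng_tm[OF nx ny] ngng x y by simp
  hence "ng (ng (tm (ng x) (ng y))) = ng (tj x y)" by simp
  thus ?thesis using ngng[OF cl(1)[OF nx ny]] by simp
qed


lemma pi_km: assumes a: "a \<in> C" and b: "b \<in> C" and c: "c \<in> C"
  shows "km (km a b) c = km (km a c) (km b c)"
proof -
  have "km (km a c) (km b c) = km a (km c (km b c))" using asc(3)[OF a c cl(3)[OF b c]] by simp
  also have "km c (km b c) = km (km b c) c" using cm(3)[OF c cl(3)[OF b c]] .
  also have "\<dots> = km b c" using asc(3)[OF b c c] idm(2)[OF c] by simp
  finally show ?thesis using asc(3)[OF a b c] by simp
qed

lemma pi_idem: "a \<in> C \<Longrightarrow> c \<in> C \<Longrightarrow> km (km a c) c = km a c"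
  using asc(3)[of a c c] idm(2)[of c] by simp

lemma pi_kj: assumes a: "a \<in> C" and b: "b \<in> C" and c: "c \<in> C"
  shows "km (kj a b) c = kj (km a c) (km b c)"
  using dist[of km kj c a b] a b c cm(3)[OF c] cl(4)[OF a b] by simp

lemma pi_tm: assumes a: "a \<in> C" and b: "b \<in> C"
  shows "km (tm a b) tt = km (km a tt) (km b tt)"
proof -
  have "km (tm a b) tt = tm (km a tt) (km b tt)"
    using dist[of km tm tt a b] a b cst cm(3)[OF cst(2)] cl(1)[OF a b] by simp
  also have "\<dots> = km (km a tt) (km b tt)"
    using L1[OF cl(3)[OF a cst(2)] cl(3)[OF b cst(2)] pi_idem[OF a cst(2)] pi_idem[OF b cst(2)]] .
  finally show ?thesis .
qed

lemma pi_tj: assumes a: "a \<in> C" and b: "b \<in> C"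
  shows "km (tj a b) tt = kj (km a tt) (km b tt)"
proof -
  have "km (tj a b) tt = tj (km a tt) (km b tt)"
    using dist[of km tj tt a b] a b cst cm(3)[OF cst(2)] cl(2)[OF a b] by simp
  also have "\<dots> = kj (km a tt) (km b tt)"
    using L2[OF cl(3)[OF a cst(2)] cl(3)[OF b cst(2)] pi_idem[OF a cst(2)] pi_idem[OF b cst(2)]] .
  finally show ?thesis .
qed

lemma pi2: "a \<in> C \<Longrightarrow> km a ff = ng (km (ng a) tt)"
  using ng_km[of "ng a" tt] ngC ngng cst ng_tt by simp

lemma pi2_tm: assumes a: "a \<in> C" and b: "b \<in> C"
  shows "km (tm a b) ff = kj (km a ff) (km b ff)"
proof -
  have na: "ng a \<in> C" and nb: "ng b \<in> C" using a b ngC by auto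
  have "km (tm a b) ff = ng (km (tj (ng a) (ng b)) tt)" using pi2[OF cl(1)[OF a b]] ng_tm[OF a b] by simp
  also have "\<dots> = ng (kj (km (ng a) tt) (km (ng b) tt))" using pi_tj[OF na nb] by simp
  also have "\<dots> = kj (km a ff) (km b ff)"
    using ng_kj[OF cl(3)[OF na cst(2)] cl(3)[OF nb cst(2)]] pi2[OF a] pi2[OF b] by simp
  finally show ?thesis .
qed

lemma pi2_tj: assumes a: "a \<in> C" and b: "b \<in> C"
  shows "km (tj a b) ff = km (km a ff) (km b ff)"
proof -
  have na: "ng a \<in> C" and nb: "ng b \<in> C" using a b ngC by auto
  have "km (tj a b) ff = ng (km (tm (ng a) (ng b)) tt)" using pi2[OF cl(2)[OF a b]] ng_tj[OF a b] by simp
  also have "\<dots> = ng (km (km (ng a) tt) (km (ng b) tt))" using pi_tm[OF na nb] by simp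
  also have "\<dots> = km (km a ff) (km b ff)"
    using ng_km[OF cl(3)[OF na cst(2)] cl(3)[OF nb cst(2)]] pi2[OF a] pi2[OF b] by simp
  finally show ?thesis .
qed

lemma sub_bdl: assumes c: "c \<in> C" shows "bdl {x \<in> C. km x c = x} km kj bo c"
proof -
  let ?L = "{x \<in> C. km x c = x}"
  have "lattice_on ?L km kj"
    unfolding lattice_on_def
  proof (intro conjI ballI)
    fix x y assume x: "x \<in> ?L" and y: "y \<in> ?L"
    show "km x y \<in> ?L" using x y c cl(3)[of x y] asc(3)[of x y c] by auto
    show "kj x y \<in> ?L" using x y cl(4) pi_kj[of x y c] c by auto
    show "km x y = km y x" "kj x y = kj y x" using x y cm by auto
    show "km x (kj x y) = x" "kj x (km x y) = x" using x y ab by auto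
    fix z assume z: "z \<in> ?L"
    show "km x (km y z) = km (km x y) z" "kj x (kj y z) = kj (kj x y) z" using x y z asc by auto
  qed
  moreover have "\<forall>x\<in>?L. \<forall>y\<in>?L. \<forall>w\<in>?L. km x (kj y w) = kj (km x y) (km x w)"
    using dist[of km kj] by auto
  moreover have "bo \<in> ?L" using cst(3) c cm(3)[OF cst(3) c] bnd(3)[OF c] by simp
  moreover have "c \<in> ?L" using c idm(2)[OF c] by simp
  moreover have "\<forall>x\<in>?L. lat_le km bo x \<and> lat_le km x c" using bnd(3) unfolding lat_le_def by auto
  ultimately show ?thesis unfolding bdl_def by blast
qed

end

lemma bd_dbl: assumes "bd_bilattice B"
  shows "dbl (bcar B) (tmeet B) (tjoin B) (kmeet B) (kjoin B) (bneg B) (bf B) (bt B) (bbot B) (btop B)"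
proof -
  note h = assms[unfolded bd_bilattice_def le_t_def le_k_def lat_le_def]
  note c1 = h[THEN conjunct1]
  note r1 = h[THEN conjunct2]
  note c2 = r1[THEN conjunct1]
  note r2 = r1[THEN conjunct2]
  note c3 = r2[THEN conjunct1]
  note r3 = r2[THEN conjunct2]
  note c4 = r3[THEN conjunct1]
  note r4 = r3[THEN conjunct2]
  note c5 = r4[THEN conjunct1]
  note r5 = r4[THEN conjunct2]
  note c6 = r5[THEN conjunct1]
  note r6 = r5[THEN conjunct2]
  note c7 = r6[THEN conjunct1]
  note r7 = r6[THEN conjunct2]
  note c8 = r7[THEN conjunct1]
  note r8 = r7[THEN conjunct2]
  note c9 = r8[THEN conjunct1]
  note r9 = r8[THEN conjunct2]
  note c10 = r9[THEN conjunct1]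
  note c11 = r9[THEN conjunct2]
  show ?thesis
  proof (unfold_locales)
    show "lattice_on (bcar B) (tmeet B) (tjoin B)" by (rule c1)
    show "lattice_on (bcar B) (kmeet B) (kjoin B)" by (rule c2)
    show "\<And>x. x \<in> bcar B \<Longrightarrow> bneg B x \<in> bcar B" using c3 by blast
    show "\<And>x. x \<in> bcar B \<Longrightarrow> bneg B (bneg B x) = x" using c3 by blast
    show "\<And>x y. x \<in> bcar B \<Longrightarrow> y \<in> bcar B \<Longrightarrow> tmeet B x y = x \<Longrightarrow> tmeet B (bneg B y) (bneg B x) = bneg B y"
      using c4 by blast
    show "\<And>x y. x \<in> bcar B \<Longrightarrow> y \<in> bcar B \<Longrightarrow> kmeet B x y = x \<Longrightarrow> kmeet B (bneg B x) (bneg B y) = bneg B x"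
      using c5 by blast
    show "\<And>o1 o2 x y z. o1 \<in> {tmeet B, tjoin B, kmeet B, kjoin B} \<Longrightarrow> o2 \<in> {tmeet B, tjoin B, kmeet B, kjoin B} \<Longrightarrow>
       x \<in> bcar B \<Longrightarrow> y \<in> bcar B \<Longrightarrow> z \<in> bcar B \<Longrightarrow> o1 x (o2 y z) = o2 (o1 x y) (o1 x z)"
    proof -
      fix o1 o2 x y z
      assume a: "o1 \<in> {tmeet B, tjoin B, kmeet B, kjoin B}" "o2 \<in> {tmeet B, tjoin B, kmeet B, kjoin B}"
        "x \<in> bcar B" "y \<in> bcar B" "z \<in> bcar B"
      have "\<forall>o1\<in>{tmeet B, tjoin B, kmeet B, kjoin B}. \<forall>o2\<in>{tmeet B, tjoin B, kmeet B, kjoin B}.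
        \<forall>x\<in>bcar B. \<forall>y\<in>bcar B. \<forall>z\<in>bcar B. o1 x (o2 y z) = o2 (o1 x y) (o1 x z)" by (rule c6)
      then show "o1 x (o2 y z) = o2 (o1 x y) (o1 x z)" using a by blast
    qed
    show "bf B \<in> bcar B" "bt B \<in> bcar B" "bbot B \<in> bcar B" "btop B \<in> bcar B" by (rule c7, rule c8, rule c9, rule c10)
    show "\<And>x. x \<in> bcar B \<Longrightarrow> tmeet B (bf B) x = bf B" using c11 by blast
    show "\<And>x. x \<in> bcar B \<Longrightarrow> tmeet B x (bt B) = x" using c11 by blast
    show "\<And>x. x \<in> bcar B \<Longrightarrow> kmeet B (bbot B) x = bbot B" using c11 by blast
    show "\<And>x. x \<in> bcar B \<Longrightarrow> kmeet B x (btop B) = x" using c11 by blast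
  qed
qed

definition mkH :: "'a bilat \<Rightarrow> 'a hbl" where
  "mkH B = \<lparr>L1 = {x \<in> bcar B. kmeet B x (bt B) = x}, meet1 = kmeet B, join1 = kjoin B, zero1 = bbot B, one1 = bt B,
            L2 = {x \<in> bcar B. kmeet B x (bf B) = x}, meet2 = kmeet B, join2 = kjoin B, zero2 = bbot B, one2 = bf B,
            nn = bneg B, pp = bneg B\<rparr>"

lemma interp:
  assumes B: "bd_bilattice B" and v: "\<forall>x. v x \<in> bcar B"
  shows "beval B v A \<in> bcar B \<and>
    I1 (mkH B) (\<lambda>x. kmeet B (v x) (bt B)) (\<lambda>x. kmeet B (v x) (bf B)) (t1 A) = kmeet B (beval B v A) (bt B) \<and>
    I2 (mkH B) (\<lambda>x. kmeet B (v x) (bt B)) (\<lambda>x. kmeet B (v x) (bf B)) (t2 A) = kmeet B (beval B v A) (bf B)"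
proof -
  interpret dbl "bcar B" "tmeet B" "tjoin B" "kmeet B" "kjoin B" "bneg B" "bf B" "bt B" "bbot B" "btop B"
    using bd_dbl[OF B] .
  show ?thesis
  proof (induction A)
    case (Atom x) then show ?case using v by (simp add: mkH_def)
  next
    case TT then show ?case using cst idm(2) L3 by (simp add: mkH_def)
  next
    case FF then show ?case using cst idm(2) L3 cm(3)[OF cst(1) cst(2)] by (simp add: mkH_def)
  next
    case Top then show ?case using cst cm(3)[OF cst(4) cst(2)] cm(3)[OF cst(4) cst(1)] bnd(4) by (simp add: mkH_def)
  next
    case Bot then show ?case using cst bnd(3) by (simp add: mkH_def)
  next
    case (Neg A) then show ?case
      using ngC ng_km[of "beval B v A" "bf B"] ng_km[of "beval B v A" "bt B"] ng_tt ng_ff cst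
      by (simp add: mkH_def)
  next
    case (And A1 A2) then show ?case using pi_tm[of "beval B v A1" "beval B v A2"] pi2_tm[of "beval B v A1" "beval B v A2"] cl(1)[of "beval B v A1" "beval B v A2"] by (simp add: mkH_def)
  next
    case (Or A1 A2) then show ?case using pi_tj[of "beval B v A1" "beval B v A2"] pi2_tj[of "beval B v A1" "beval B v A2"] cl(2)[of "beval B v A1" "beval B v A2"] by (simp add: mkH_def)
  next
    case (Otimes A1 A2) then show ?case using pi_km[of "beval B v A1" "beval B v A2" "bt B"] pi_km[of "beval B v A1" "beval B v A2" "bf B"] cst cl(3)[of "beval B v A1" "beval B v A2"] by (simp add: mkH_def)
  next
    case (Oplus A1 A2) then show ?case using pi_kj[of "beval B v A1" "beval B v A2" "bt B"] pi_kj[of "beval B v A1" "beval B v A2" "bf B"] cst cl(4)[of "beval B v A1" "beval B v A2"] by (simp add: mkH_def)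
  qed
qed

lemma mkH_hbl: assumes B: "bd_bilattice B" shows "is_hbl (mkH B)"
proof -
  interpret dbl "bcar B" "tmeet B" "tjoin B" "kmeet B" "kjoin B" "bneg B" "bf B" "bt B" "bbot B" "btop B"
    using bd_dbl[OF B] .
  have a: "\<forall>x\<in>{x \<in> bcar B. kmeet B x (bt B) = x}. bneg B x \<in> {x \<in> bcar B. kmeet B x (bf B) = x} \<and> bneg B (bneg B x) = x"
  proof
    fix x assume x: "x \<in> {x \<in> bcar B. kmeet B x (bt B) = x}"
    hence xC: "x \<in> bcar B" and e: "kmeet B x (bt B) = x" by auto
    have "kmeet B (bneg B x) (bf B) = bneg B (kmeet B x (bt B))" using ng_km[OF xC cst(2)] ng_tt by simp
    thus "bneg B x \<in> {x \<in> bcar B. kmeet B x (bf B) = x} \<and> bneg B (bneg B x) = x"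
      using e ngC[OF xC] ngng[OF xC] by simp
  qed
  have b: "\<forall>x\<in>{x \<in> bcar B. kmeet B x (bf B) = x}. bneg B x \<in> {x \<in> bcar B. kmeet B x (bt B) = x} \<and> bneg B (bneg B x) = x"
  proof
    fix x assume x: "x \<in> {x \<in> bcar B. kmeet B x (bf B) = x}"
    hence xC: "x \<in> bcar B" and e: "kmeet B x (bf B) = x" by auto
    have "kmeet B (bneg B x) (bt B) = bneg B (kmeet B x (bf B))" using ng_km[OF xC cst(1)] ng_ff by simp
    thus "bneg B x \<in> {x \<in> bcar B. kmeet B x (bt B) = x} \<and> bneg B (bneg B x) = x"
      using e ngC[OF xC] ngng[OF xC] by simp
  qed
  have c: "\<forall>x\<in>{x \<in> bcar B. kmeet B x (bt B) = x}. \<forall>y\<in>{x \<in> bcar B. kmeet B x (bt B) = x}.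
      bneg B (kmeet B x y) = kmeet B (bneg B x) (bneg B y) \<and> bneg B (kjoin B x y) = kjoin B (bneg B x) (bneg B y)"
    using ng_km ng_kj by blast
  have d: "\<forall>x\<in>{x \<in> bcar B. kmeet B x (bf B) = x}. \<forall>y\<in>{x \<in> bcar B. kmeet B x (bf B) = x}.
      bneg B (kmeet B x y) = kmeet B (bneg B x) (bneg B y) \<and> bneg B (kjoin B x y) = kjoin B (bneg B x) (bneg B y)"
    using ng_km ng_kj by blast
  have e: "is_hbl \<lparr>L1 = {x \<in> bcar B. kmeet B x (bt B) = x}, meet1 = kmeet B, join1 = kjoin B, zero1 = bbot B, one1 = bt B,
            L2 = {x \<in> bcar B. kmeet B x (bf B) = x}, meet2 = kmeet B, join2 = kjoin B, zero2 = bbot B, one2 = bf B,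
            nn = bneg B, pp = bneg B\<rparr>"
    unfolding is_hbl_def hbl.simps
    using sub_bdl[OF cst(2)] sub_bdl[OF cst(1)] a b c d by (intro conjI)
  show ?thesis unfolding mkH_def by (rule e)
qed

theorem mainTheorem6:
  fixes A C :: "'v fm"
  assumes "\<forall>(H :: 'a hbl) a1 a2. is_hbl H \<and> (\<forall>x. a1 x \<in> L1 H) \<and> (\<forall>x. a2 x \<in> L2 H) \<longrightarrow>
             lat_le (meet1 H) (I1 H a1 a2 (t1 A)) (I1 H a1 a2 (t1 C))"
  shows "\<forall>(B :: 'a bilat) v. bd_bilattice B \<and> (\<forall>x. v x \<in> bcar B) \<longrightarrow>
             in_Ft B (beval B v A) \<longrightarrow> in_Ft B (beval B v C)"
proof (intro allI impI)
  fix B :: "'a bilat" and v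
  assume h: "bd_bilattice B \<and> (\<forall>x. v x \<in> bcar B)" and ft: "in_Ft B (beval B v A)"
  interpret dbl "bcar B" "tmeet B" "tjoin B" "kmeet B" "kjoin B" "bneg B" "bf B" "bt B" "bbot B" "btop B"
    using bd_dbl h by blast
  let ?a1 = "\<lambda>x. kmeet B (v x) (bt B)" and ?a2 = "\<lambda>x. kmeet B (v x) (bf B)"
  have iA: "beval B v A \<in> bcar B" "I1 (mkH B) ?a1 ?a2 (t1 A) = kmeet B (beval B v A) (bt B)"
    using interp[of B v A] h by auto
  have iC: "beval B v C \<in> bcar B" "I1 (mkH B) ?a1 ?a2 (t1 C) = kmeet B (beval B v C) (bt B)"
    using interp[of B v C] h by auto
  have "\<forall>x. ?a1 x \<in> L1 (mkH B)" using h cl(3) cst pi_idem by (simp add: mkH_def)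
  moreover have "\<forall>x. ?a2 x \<in> L2 (mkH B)" using h cl(3) cst pi_idem by (simp add: mkH_def)
  ultimately have le: "lat_le (meet1 (mkH B)) (I1 (mkH B) ?a1 ?a2 (t1 A)) (I1 (mkH B) ?a1 ?a2 (t1 C))"
    using assms[THEN spec[of _ "mkH B"], THEN spec[of _ ?a1], THEN spec[of _ ?a2]] mkH_hbl h by blast
  let ?a = "beval B v A" and ?c = "beval B v C"
  have ta: "kmeet B ?a (bt B) = bt B" using ft iA(1) cm(3)[OF iA(1) cst(2)]
    unfolding in_Ft_def le_k_def lat_le_def by simp
  have "kmeet B (bt B) (kmeet B ?c (bt B)) = bt B" using le iA iC ta unfolding lat_le_def by (simp add: mkH_def)
  moreover have "kmeet B (bt B) (kmeet B ?c (bt B)) = kmeet B ?c (bt B)"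
    using cm(3)[OF cst(2) cl(3)[OF iC(1) cst(2)]] pi_idem[OF iC(1) cst(2)] by simp
  ultimately have "kmeet B ?c (bt B) = bt B" by simp
  then show "in_Ft B ?c" using iC(1) cm(3)[OF iC(1) cst(2)] unfolding in_Ft_def le_k_def lat_le_def by simp
qed



end
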